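(* Let $d\ge1$, let $\nu_0:\mathbb{Z}^d\to[0,\infty)$ have finite support, and let $x_1,x_2,\ldots\in\mathbb{Z}^d$ be a sequence in which every $x\in\mathbb{Z}^d$ appears infinitely often. Let $u_k(x)$ be the total mass emitted by $x$ and $\nu_k(x)$ the mass present at $x$ after starting from $\nu_0$ and toppling $x_1,\ldots,x_k$ in succession. Then $u_k\uparrow u$ and $\nu_k\to\nu$ pointwise, where $u$ is finite and $\nu\le 1$. Moreover, the limits $u$ and $\nu$ do not depend on the choice of the sequence $(x_k)$.
   Context: Divisible sandpile: a mass distribution is a function $\mu:\mathbb{Z}^d\to[0,\infty)$. Toppling a site $x$ replaces $\mu$ by $\mu+\alpha\,\Delta\delta_x$ where $\alpha=\max(\mu(x)-1,0)$; i.e. if $\mu(x)>1$, the site keeps mass $1$ and sends mass $(\mu(x)-1)/(2d)$ to each of its $2d$ lattice neighbors, and if $\mu(x)\le1$ nothing happens. The mass emitted by $x$ in that toppling is $\alpha$. Here $\Delta f(x)=\frac{1}{2d}\sum_{y\sim x}f(y)-f(x)$ is the discrete Laplacian, the sum over the $2d$ lattice neighbors of $x$, and $\delta_x$ is the indicator of $\{x\}$. *)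

theory Defs
  imports "HOL-Analysis.Analysis"
begin

text \<open>The lattice Z^d is modelled as int ^ 'd for a finite index type 'd, d = CARD('d) >= 1.\<close>

definition lattice_nbrs :: "int ^ 'd \<Rightarrow> (int ^ 'd) set" where
  "lattice_nbrs x = {y. (\<Sum>i\<in>UNIV. \<bar>y $ i - x $ i\<bar>) = 1}"

definition lattice_lap :: "(int ^ 'd \<Rightarrow> real) \<Rightarrow> int ^ 'd \<Rightarrow> real" where
  "lattice_lap f x = (\<Sum>y\<in>lattice_nbrs x. f y) / (2 * real CARD('d)) - f x"

definition delta_at :: "int ^ 'd \<Rightarrow> int ^ 'd \<Rightarrow> real" where
  "delta_at x = (\<lambda>y. if y = x then 1 else 0)"

definition emitted_mass :: "(int ^ 'd \<Rightarrow> real) \<Rightarrow> int ^ 'd \<Rightarrow> real" where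
  "emitted_mass \<mu> x = max (\<mu> x - 1) 0"

definition topple :: "(int ^ 'd \<Rightarrow> real) \<Rightarrow> int ^ 'd \<Rightarrow> (int ^ 'd \<Rightarrow> real)" where
  "topple \<mu> x = (\<lambda>y. \<mu> y + emitted_mass \<mu> x * lattice_lap (delta_at x) y)"

text \<open>Mass after toppling x_1..x_k (the sequence is indexed from 0: x_{i+1} = xs i).\<close>
fun sp_mass :: "(int ^ 'd \<Rightarrow> real) \<Rightarrow> (nat \<Rightarrow> int ^ 'd) \<Rightarrow> nat \<Rightarrow> (int ^ 'd \<Rightarrow> real)" where
  "sp_mass \<nu>0 xs 0 = \<nu>0"
| "sp_mass \<nu>0 xs (Suc k) = topple (sp_mass \<nu>0 xs k) (xs k)"

fun sp_odometer :: "(int ^ 'd \<Rightarrow> real) \<Rightarrow> (nat \<Rightarrow> int ^ 'd) \<Rightarrow> nat \<Rightarrow> (int ^ 'd \<Rightarrow> real)" where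
  "sp_odometer \<nu>0 xs 0 = (\<lambda>y. 0)"
| "sp_odometer \<nu>0 xs (Suc k) = (\<lambda>y. sp_odometer \<nu>0 xs k y +
      (if y = xs k then emitted_mass (sp_mass \<nu>0 xs k) (xs k) else 0))"

end

theory Submission
  imports Defs
begin

lemma lap_lin: "lattice_lap (\<lambda>y. f y + c * g y) x = lattice_lap f x + c * lattice_lap g x"
  unfolding lattice_lap_def by (simp add: sum.distrib sum_distrib_left add_divide_distrib algebra_simps)

lemma odo_Suc: "sp_odometer \<nu>0 xs (Suc k) = (\<lambda>y. sp_odometer \<nu>0 xs k y + emitted_mass (sp_mass \<nu>0 xs k) (xs k) * delta_at (xs k) y)"
  by (auto simp: delta_at_def)

lemma mass_eq: "sp_mass \<nu>0 xs k y = \<nu>0 y + lattice_lap (sp_odometer \<nu>0 xs k) y"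
proof (induction k arbitrary: y)
  case 0
  then show ?case by (simp add: lattice_lap_def)
next
  case (Suc k)
  show ?case unfolding odo_Suc lap_lin by (simp add: topple_def Suc)
qed

lemma not_self_nbr: "x \<notin> lattice_nbrs x"
  by (simp add: lattice_nbrs_def)

lemma lap_delta_self: "lattice_lap (delta_at x) x = -1"
proof -
  have "(\<Sum>y\<in>lattice_nbrs x. delta_at x y) = 0"
    by (rule sum.neutral) (use not_self_nbr in \<open>auto simp: delta_at_def\<close>)
  then show ?thesis by (simp add: lattice_lap_def delta_at_def)
qed

lemma topple_self: "topple \<mu> x x \<le> 1"
  by (simp add: topple_def lap_delta_self emitted_mass_def)

lemma em_nonneg: "emitted_mass \<mu> x \<ge> 0" by (simp add: emitted_mass_def)

lemma odo_inc: "incseq (\<lambda>k. sp_odometer \<nu>0 xs k x)"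
  by (rule incseq_SucI) (simp add: em_nonneg)

lemma odo_nonneg: "sp_odometer \<nu>0 xs k x \<ge> 0"
  by (induction k) (auto simp: em_nonneg)

definition adm :: "(int ^ 'd \<Rightarrow> real) \<Rightarrow> (int ^ 'd \<Rightarrow> real) \<Rightarrow> bool" where
  "adm \<nu>0 w \<longleftrightarrow> (\<forall>x. 0 \<le> w x) \<and> (\<forall>x. \<nu>0 x + lattice_lap w x \<le> 1)"

lemma odo_le:
  fixes w :: "int ^ 'd \<Rightarrow> real"
  assumes "adm \<nu>0 w"
  shows "sp_odometer \<nu>0 xs k y \<le> w y"
proof (induction k arbitrary: y)
  case 0
  then show ?case using assms by (simp add: adm_def)
next
  case (Suc k)
  let ?u = "sp_odometer \<nu>0 xs k"
  let ?x = "xs k"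
  show ?case
  proof (cases "y = ?x")
    case False
    then show ?thesis using Suc by simp
  next
    case True
    have s: "(\<Sum>z\<in>lattice_nbrs ?x. ?u z) \<le> (\<Sum>z\<in>lattice_nbrs ?x. w z)"
      by (rule sum_mono) (rule Suc)
    have "(\<Sum>z\<in>lattice_nbrs ?x. ?u z) / (2 * real CARD('d)) \<le> (\<Sum>z\<in>lattice_nbrs ?x. w z) / (2 * real CARD('d))"
      by (rule divide_right_mono[OF s]) simp
    moreover have "\<nu>0 ?x + lattice_lap w ?x \<le> 1" using assms by (simp add: adm_def)
    moreover have "?u ?x \<le> w ?x" by (rule Suc)
    ultimately show ?thesis using True
      by (simp add: emitted_mass_def mass_eq lattice_lap_def)
  qed
qed


lemma axis_nth': "axis i (1::int) $ j = (if j = i then 1 else 0)"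
  by (simp add: axis_def)

lemma nbrs_char:
  fixes x :: "int ^ 'd"
  shows "lattice_nbrs x = range (\<lambda>i. x + axis i 1) \<union> range (\<lambda>i. x - axis i 1)"
proof
  show "range (\<lambda>i. x + axis i 1) \<union> range (\<lambda>i. x - axis i 1) \<subseteq> lattice_nbrs x"
  proof
    fix y assume "y \<in> range (\<lambda>i. x + axis i 1) \<union> range (\<lambda>i. x - axis i 1)"
    then obtain i where "y = x + axis i 1 \<or> y = x - axis i 1" by blast
    then have "\<And>j. \<bar>y $ j - x $ j\<bar> = (if j = i then 1 else 0)"
      by (auto simp: axis_nth')
    then show "y \<in> lattice_nbrs x" by (simp add: lattice_nbrs_def)
  qed
next
  show "lattice_nbrs x \<subseteq> range (\<lambda>i. x + axis i 1) \<union> range (\<lambda>i. x - axis i 1)"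
  proof
    fix y assume "y \<in> lattice_nbrs x"
    then have s: "(\<Sum>j\<in>UNIV. \<bar>y $ j - x $ j\<bar>) = 1" by (simp add: lattice_nbrs_def)
    have "\<exists>i. y $ i - x $ i \<noteq> 0"
    proof (rule ccontr)
      assume "\<not> ?thesis" then have "(\<Sum>j\<in>UNIV. \<bar>y $ j - x $ j\<bar>) = 0" by simp
      with s show False by simp
    qed
    then obtain i where i: "y $ i - x $ i \<noteq> 0" by blast
    have s2: "\<bar>y $ i - x $ i\<bar> + (\<Sum>j\<in>UNIV-{i}. \<bar>y $ j - x $ j\<bar>) = 1"
      using s sum.remove[of UNIV i "\<lambda>j. \<bar>y $ j - x $ j\<bar>"] by simp
    have r0: "(\<Sum>j\<in>UNIV-{i}. \<bar>y $ j - x $ j\<bar>) \<ge> 0" by (rule sum_nonneg) simp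
    from i have "\<bar>y $ i - x $ i\<bar> \<ge> 1" by linarith
    with s2 r0 have a1: "\<bar>y $ i - x $ i\<bar> = 1" and r: "(\<Sum>j\<in>UNIV-{i}. \<bar>y $ j - x $ j\<bar>) = 0"
      by linarith+
    from r have z: "\<And>j. j \<noteq> i \<Longrightarrow> y $ j = x $ j"
      using sum_nonneg_eq_0_iff[of "UNIV-{i}" "\<lambda>j. \<bar>y $ j - x $ j\<bar>"] by auto
    from a1 consider "y $ i = x $ i + 1" | "y $ i = x $ i - 1" by linarith
    then show "y \<in> range (\<lambda>i. x + axis i 1) \<union> range (\<lambda>i. x - axis i 1)"
    proof cases
      case 1
      then have "y = x + axis i 1" using z by (auto simp: vec_eq_iff axis_nth')
      then show ?thesis by blast
    next
      case 2
      then have "y = x - axis i 1" using z by (auto simp: vec_eq_iff axis_nth')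
      then show ?thesis by blast
    qed
  qed
qed

lemma nbrs_sum:
  fixes x :: "int ^ 'd" and g :: "int ^ 'd \<Rightarrow> real"
  shows "(\<Sum>y\<in>lattice_nbrs x. g y) = (\<Sum>i\<in>UNIV. g (x + axis i 1)) + (\<Sum>i\<in>UNIV. g (x - axis i 1))"
proof -
  have inj1: "inj (\<lambda>i. x + axis i (1::int))"
    by (rule injI) (auto simp: vec_eq_iff axis_nth' split: if_splits)
  have inj2: "inj (\<lambda>i. x - axis i (1::int))"
    by (rule injI) (auto simp: vec_eq_iff axis_nth' split: if_splits)
  have disj: "range (\<lambda>i. x + axis i 1) \<inter> range (\<lambda>i. x - axis i 1) = {}"
  proof (rule ccontr)
    assume "\<not> ?thesis"
    then obtain i j where "x + axis i (1::int) = x - axis j 1" by auto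
    then have "(x + axis i (1::int)) $ i = (x - axis j 1) $ i" by simp
    then show False by (auto simp: axis_nth' split: if_splits)
  qed
  show ?thesis
    unfolding nbrs_char
    by (subst sum.union_disjoint) (auto simp: disj sum.reindex[OF inj1] sum.reindex[OF inj2])
qed


lemma abs_second_diff:
  fixes a :: int
  shows "\<bar>real_of_int a + 1\<bar> + \<bar>real_of_int a - 1\<bar> - 2 * \<bar>real_of_int a\<bar> = (if a = 0 then 2 else 0)"
proof -
  consider "a = 0" | "a \<ge> 1" | "a \<le> -1" by linarith
  then show ?thesis
  proof cases
    case 2 then have "real_of_int a \<ge> 1" by simp
    then show ?thesis using 2 by simp
  next
    case 3 then have "real_of_int a \<le> -1" by simp
    then show ?thesis using 3 by simp
  qed simp
qed

lemma sum_if_const: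
  fixes a b :: real and i0 :: "'d::finite"
  shows "(\<Sum>i\<in>UNIV. if i = i0 then a else b) = real CARD('d) * b + (a - b)"
proof -
  have "(\<Sum>i\<in>UNIV. if i = i0 then a else b) = (\<Sum>i\<in>UNIV. b + (if i = i0 then a - b else 0))"
    by (rule sum.cong) auto
  also have "\<dots> = real CARD('d) * b + (a - b)"
    by (simp add: sum.distrib)
  finally show ?thesis .
qed

lemma lap_coord:
  fixes \<phi> :: "int \<Rightarrow> real" and i0 :: "'d::finite" and x :: "int ^ 'd"
  shows "lattice_lap (\<lambda>y. \<phi> (y $ i0)) x
     = (\<phi> (x $ i0 + 1) + \<phi> (x $ i0 - 1) - 2 * \<phi> (x $ i0)) / (2 * real CARD('d))"
proof -
  let ?t = "x $ i0"
  have e1: "(\<Sum>i\<in>UNIV. \<phi> ((x + axis i 1) $ i0)) = (\<Sum>i\<in>UNIV. if i = i0 then \<phi> (?t + 1) else \<phi> ?t)"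
    by (rule sum.cong) (auto simp: axis_nth')
  have e2: "(\<Sum>i\<in>UNIV. \<phi> ((x - axis i 1) $ i0)) = (\<Sum>i\<in>UNIV. if i = i0 then \<phi> (?t - 1) else \<phi> ?t)"
    by (rule sum.cong) (auto simp: axis_nth')
  have c: "real CARD('d) > 0" by simp
  show ?thesis
    unfolding lattice_lap_def nbrs_sum e1 e2 sum_if_const
    using c by (simp add: field_simps)
qed

lemma adm_exists:
  fixes \<nu>0 :: "int ^ 'd \<Rightarrow> real"
  assumes nonneg: "\<forall>x. \<nu>0 x \<ge> 0"
    and fin: "finite {x. \<nu>0 x \<noteq> 0}"
  shows "\<exists>w. adm \<nu>0 w"
proof -
  define S where "S = {x. \<nu>0 x \<noteq> 0}"
  define i0 where "i0 = (undefined :: 'd)"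
  define P where "P = (\<lambda>x. x $ i0) ` S"
  define M where "M = (\<Sum>x\<in>S. \<nu>0 x)"
  define c where "c = 1 + real CARD('d) * M"
  define Q where "Q = (\<Sum>s\<in>P. \<bar>real_of_int s\<bar>)"
  define n where "n = real (card P)"
  define A where "A = c * Q + (c * n)^2"
  define \<phi> where "\<phi> = (\<lambda>t::int. (real_of_int t)^2 - c * (\<Sum>s\<in>P. \<bar>real_of_int t - real_of_int s\<bar>) + A)"
  have finP: "finite P" using fin by (simp add: S_def P_def)
  have M0: "M \<ge> 0" unfolding M_def by (rule sum_nonneg) (use nonneg in auto)
  have c0: "c \<ge> 1" unfolding c_def using M0 by simp
  have Mle: "\<nu>0 x \<le> M" if "x \<in> S" for x
    unfolding M_def using fin that nonneg by (intro member_le_sum) (auto simp: S_def)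
  have D: "\<phi> (t + 1) + \<phi> (t - 1) - 2 * \<phi> t = 2 - c * (if t \<in> P then 2 else 0)" for t
  proof -
    have "(\<Sum>s\<in>P. \<bar>real_of_int (t+1) - real_of_int s\<bar>) + (\<Sum>s\<in>P. \<bar>real_of_int (t-1) - real_of_int s\<bar>)
          - 2 * (\<Sum>s\<in>P. \<bar>real_of_int t - real_of_int s\<bar>)
        = (\<Sum>s\<in>P. \<bar>real_of_int (t - s) + 1\<bar> + \<bar>real_of_int (t - s) - 1\<bar> - 2 * \<bar>real_of_int (t - s)\<bar>)"
      by (simp add: sum.distrib sum_subtractf sum_distrib_left algebra_simps)
    also have "\<dots> = (\<Sum>s\<in>P. if t = s then 2 else 0)"
    proof (rule sum.cong[OF refl])
      fix s assume "s \<in> P"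
      show "\<bar>real_of_int (t - s) + 1\<bar> + \<bar>real_of_int (t - s) - 1\<bar> - 2 * \<bar>real_of_int (t - s)\<bar> = (if t = s then 2 else 0)"
        using abs_second_diff[of "t - s"] by simp
    qed
    also have "\<dots> = (if t \<in> P then 2 else 0)"
      using finP by simp
    finally have h: "(\<Sum>s\<in>P. \<bar>real_of_int (t+1) - real_of_int s\<bar>) + (\<Sum>s\<in>P. \<bar>real_of_int (t-1) - real_of_int s\<bar>)
          - 2 * (\<Sum>s\<in>P. \<bar>real_of_int t - real_of_int s\<bar>) = (if t \<in> P then 2 else 0)" .
    have "\<phi> (t + 1) + \<phi> (t - 1) - 2 * \<phi> t
       = ((real_of_int t + 1)^2 + (real_of_int t - 1)^2 - 2 * (real_of_int t)^2)
         - c * ((\<Sum>s\<in>P. \<bar>real_of_int (t+1) - real_of_int s\<bar>) + (\<Sum>s\<in>P. \<bar>real_of_int (t-1) - real_of_int s\<bar>)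
          - 2 * (\<Sum>s\<in>P. \<bar>real_of_int t - real_of_int s\<bar>))"
      unfolding \<phi>_def by (simp add: algebra_simps)
    also have "\<dots> = 2 - c * (if t \<in> P then 2 else 0)"
      unfolding h by (simp add: power2_eq_square algebra_simps)
    finally show ?thesis .
  qed
  have pos: "\<phi> t \<ge> 0" for t
  proof -
    have "(\<Sum>s\<in>P. \<bar>real_of_int t - real_of_int s\<bar>) \<le> (\<Sum>s\<in>P. \<bar>real_of_int t\<bar> + \<bar>real_of_int s\<bar>)"
      by (rule sum_mono) (rule abs_triangle_ineq4)
    also have "\<dots> = n * \<bar>real_of_int t\<bar> + Q"
      by (simp add: sum.distrib n_def Q_def)
    finally have b: "(\<Sum>s\<in>P. \<bar>real_of_int t - real_of_int s\<bar>) \<le> n * \<bar>real_of_int t\<bar> + Q" .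
    have "c * (\<Sum>s\<in>P. \<bar>real_of_int t - real_of_int s\<bar>) \<le> c * (n * \<bar>real_of_int t\<bar> + Q)"
      using b c0 by (intro mult_left_mono) auto
    moreover have "(real_of_int t)^2 - c * n * \<bar>real_of_int t\<bar> + (c*n)^2 \<ge> 0"
    proof -
      have "(real_of_int t)^2 - c * n * \<bar>real_of_int t\<bar> + (c*n)^2
          = (\<bar>real_of_int t\<bar> - c*n/2)^2 + 3/4 * (c*n)^2"
        by (simp add: power2_eq_square algebra_simps)
      also have "\<dots> \<ge> 0" by simp
      finally show ?thesis .
    qed
    ultimately show ?thesis unfolding \<phi>_def A_def by (simp add: algebra_simps)
  qed
  define w where "w = (\<lambda>y::int ^ 'd. \<phi> (y $ i0))"
  have "adm \<nu>0 w"
    unfolding adm_def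
  proof (intro conjI allI)
    fix x show "0 \<le> w x" by (simp add: w_def pos)
  next
    fix x :: "int ^ 'd"
    have L: "lattice_lap w x = (2 - c * (if x $ i0 \<in> P then 2 else 0)) / (2 * real CARD('d))"
      unfolding w_def lap_coord D ..
    have cp: "real CARD('d) \<ge> 1" by (simp add: Suc_leI)
    show "\<nu>0 x + lattice_lap w x \<le> 1"
    proof (cases "x \<in> S")
      case True
      then have "x $ i0 \<in> P" by (simp add: P_def)
      then have "lattice_lap w x = -M" using cp unfolding L c_def by (simp add: field_simps)
      then show ?thesis using Mle[OF True] by simp
    next
      case False
      then have z: "\<nu>0 x = 0" by (simp add: S_def)
      have "(2 - c * (if x $ i0 \<in> P then 2 else 0)) \<le> 2 * real CARD('d)"
        using c0 cp by auto
      then have "lattice_lap w x \<le> 1" unfolding L using cp by (simp add: divide_le_eq)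
      then show ?thesis using z by simp
    qed
  qed
  then show ?thesis by blast
qed


lemma lap_tendsto:
  assumes "\<And>y. (\<lambda>k. f k y) \<longlonglongrightarrow> g y"
  shows "(\<lambda>k. lattice_lap (f k) x) \<longlonglongrightarrow> lattice_lap g x"
  unfolding lattice_lap_def by (intro tendsto_intros assms) simp

theorem proposition1p2:
  fixes \<nu>0 :: "int ^ 'd \<Rightarrow> real"
  assumes nonneg: "\<forall>x. \<nu>0 x \<ge> 0"
    and fin: "finite {x. \<nu>0 x \<noteq> 0}"
  shows "\<exists>u \<nu> :: int ^ 'd \<Rightarrow> real. (\<forall>x. \<nu> x \<le> 1) \<and>
    (\<forall>xs :: nat \<Rightarrow> int ^ 'd. (\<forall>x. infinite {k. xs k = x}) \<longrightarrow>
       (\<forall>x. incseq (\<lambda>k. sp_odometer \<nu>0 xs k x) \<and>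
            (\<lambda>k. sp_odometer \<nu>0 xs k x) \<longlonglongrightarrow> u x \<and>
            (\<lambda>k. sp_mass \<nu>0 xs k x) \<longlonglongrightarrow> \<nu> x))"
proof -
  obtain W where W: "adm \<nu>0 W" using adm_exists[OF nonneg fin] by blast
  define U where "U = (\<lambda>x. Inf {w x | w. adm \<nu>0 w})"
  have ne: "{w x | w. adm \<nu>0 w} \<noteq> {}" for x using W by blast
  have bdd: "bdd_below {w x | w. adm \<nu>0 w}" for x
    by (rule bdd_belowI[of _ 0]) (auto simp: adm_def)
  have U_le: "U x \<le> w x" if "adm \<nu>0 w" for w x
    unfolding U_def by (rule cInf_lower[OF _ bdd]) (use that in blast)
  have U_ge: "c \<le> U x" if "\<And>w. adm \<nu>0 w \<Longrightarrow> c \<le> w x" for c x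
    unfolding U_def by (rule cInf_greatest[OF ne]) (use that in blast)
  have U_adm: "adm \<nu>0 U"
    unfolding adm_def
  proof (intro conjI allI)
    fix x show "0 \<le> U x" by (rule U_ge) (simp add: adm_def)
  next
    fix x :: "int ^ 'd"
    have "\<nu>0 x + (\<Sum>y\<in>lattice_nbrs x. U y) / (2 * real CARD('d)) - 1 \<le> U x"
    proof (rule U_ge)
      fix w assume w: "adm \<nu>0 w"
      have s: "(\<Sum>y\<in>lattice_nbrs x. U y) \<le> (\<Sum>y\<in>lattice_nbrs x. w y)"
        by (rule sum_mono) (rule U_le[OF w])
      have "(\<Sum>y\<in>lattice_nbrs x. U y) / (2 * real CARD('d)) \<le> (\<Sum>y\<in>lattice_nbrs x. w y) / (2 * real CARD('d))"
        by (rule divide_right_mono[OF s]) simp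
      moreover have "\<nu>0 x + lattice_lap w x \<le> 1" using w by (simp add: adm_def)
      ultimately show "\<nu>0 x + (\<Sum>y\<in>lattice_nbrs x. U y) / (2 * real CARD('d)) - 1 \<le> w x"
        by (simp add: lattice_lap_def)
    qed
    then show "\<nu>0 x + lattice_lap U x \<le> 1" by (simp add: lattice_lap_def)
  qed
  show ?thesis
  proof (intro exI conjI allI impI)
    fix x show "\<nu>0 x + lattice_lap U x \<le> 1" using U_adm by (simp add: adm_def)
  next
    fix xs :: "nat \<Rightarrow> int ^ 'd" and x
    assume good: "\<forall>x. infinite {k. xs k = x}"
    let ?u = "sp_odometer \<nu>0 xs"
    have uU: "?u k y \<le> U y" for k y
      by (rule U_ge) (rule odo_le)
    have bdda: "bdd_above (range (\<lambda>k. ?u k y))" for y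
      by (rule bdd_aboveI[of _ "U y"]) (auto intro: uU)
    define L where "L = (\<lambda>y. SUP k. ?u k y)"
    have Lim: "(\<lambda>k. ?u k y) \<longlonglongrightarrow> L y" for y
      unfolding L_def by (rule LIMSEQ_incseq_SUP[OF bdda odo_inc])
    have LU: "L y \<le> U y" for y
      unfolding L_def by (rule cSUP_least) (auto intro: uU)
    have mlim: "(\<lambda>k. sp_mass \<nu>0 xs k y) \<longlonglongrightarrow> \<nu>0 y + lattice_lap L y" for y
      unfolding mass_eq by (intro tendsto_intros lap_tendsto Lim)
    have "adm \<nu>0 L"
      unfolding adm_def
    proof (intro conjI allI)
      fix y
      have "?u 0 y \<le> L y" unfolding L_def by (rule cSUP_upper[OF _ bdda]) simp
      then show "0 \<le> L y" by simp
    next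
      fix y
      show "\<nu>0 y + lattice_lap L y \<le> 1"
      proof (rule ccontr)
        assume "\<not> ?thesis"
        then have "1 < \<nu>0 y + lattice_lap L y" by simp
        from order_tendstoD(1)[OF mlim this]
        obtain N where N: "\<And>k. k \<ge> N \<Longrightarrow> 1 < sp_mass \<nu>0 xs k y"
          unfolding eventually_sequentially by blast
        from good have "infinite {k. xs k = y}" by blast
        then obtain k where k: "xs k = y" "k \<ge> N"
          unfolding infinite_nat_iff_unbounded_le by blast
        have "sp_mass \<nu>0 xs (Suc k) y \<le> 1" using k topple_self[of _ y] by simp
        with N[of "Suc k"] k show False by simp
      qed
    qed
    then have "L = U" using LU U_le by (intro ext antisym) auto
    show "incseq (\<lambda>k. ?u k x)" by (rule odo_inc)
    show "(\<lambda>k. ?u k x) \<longlonglongrightarrow> U x" using Lim \<open>L = U\<close> by simp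
    show "(\<lambda>k. sp_mass \<nu>0 xs k x) \<longlonglongrightarrow> \<nu>0 x + lattice_lap U x" using mlim \<open>L = U\<close> by simp
  qed
qed

end
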